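(* Let $n\ge2$, let $P$ be a partial $n$-Metric on a set $X$, let $x_o\in X$ and let $f:X\to X$. Let $r\in\mathbb{R}$ and let $\varphi:[r,+\infty)\to[0,+\infty)$ be a non-decreasing function with $\varphi(t)=0$ if and only if $t=r$. Suppose that for all natural numbers $i,j$, $$r\le P(\langle f^i(x_o)\rangle^n)\quad\text{and}\quad P(\langle f^{i+1}(x_o)\rangle^{n-1},f^{j+1}(x_o))\le P(\langle f^i(x_o)\rangle^{n-1},f^j(x_o))-\varphi\big(P(\langle f^i(x_o)\rangle^{n-1},f^j(x_o))\big)$$ (i.e. $f$ is an orbital $\varphi_r$-contraction at $x_o$). Then the orbit $\{f^i(x_o)\}_{i\in\mathbb{N}}$ is a Cauchy sequence (i.e. $f$ is a Cauchy function at $x_o$).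
   Context: Notation: $\langle a\rangle^k$ denotes the $k$-tuple $(a,\dots,a)$ inserted into an argument list; $f^0(x_o)=x_o$, $f^{i+1}(x_o)=f(f^i(x_o))$. A partial $n$-Metric on $X$ is a function $P:X^n\to\mathbb{R}$ such that for all $x_1,\dots,x_n,a\in X$: (1) $P(\langle x_1\rangle^n)\le P(\langle x_1\rangle^{n-1},x_2)$; (2) $P$ is invariant under permutations of its arguments; (3) $P(\langle x_1\rangle^{n-1},x_2)=P(\langle x_1\rangle^n)$ and $P(\langle x_2\rangle^{n-1},x_1)=P(\langle x_2\rangle^n)$ iff $x_1=x_2$; (4) $P(x_1,\dots,x_n)\le P(x_1,\dots,x_{n-1},a)+P(\langle a\rangle^{n-1},x_n)-P(\langle a\rangle^n)$. A sequence $\{x_i\}$ is Cauchy if there is $r'\in\mathbb{R}$ (its central distance) such that for every $\epsilon>0$ there is $N$ with $|P(x_{i_1},\dots,x_{i_n})-r'|<\epsilon$ for all $i_1,\dots,i_n>N$. *)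

theory Defs
  imports Complex_Main "HOL-Library.Multiset"
begin

text \<open>A partial n-metric on a set X. Arguments of P are given as a list of length n;
  the k-fold repetition of a is replicate k a.\<close>
definition partial_n_metric :: "nat \<Rightarrow> 'a set \<Rightarrow> ('a list \<Rightarrow> real) \<Rightarrow> bool" where
  "partial_n_metric n X P \<longleftrightarrow>
     (\<forall>x1\<in>X. \<forall>x2\<in>X. P (replicate n x1) \<le> P (replicate (n - 1) x1 @ [x2])) \<and>
     (\<forall>xs ys. set xs \<subseteq> X \<longrightarrow> length xs = n \<longrightarrow> mset ys = mset xs \<longrightarrow> P ys = P xs) \<and>
     (\<forall>x1\<in>X. \<forall>x2\<in>X.
        (P (replicate (n - 1) x1 @ [x2]) = P (replicate n x1) \<and>
         P (replicate (n - 1) x2 @ [x1]) = P (replicate n x2)) \<longleftrightarrow> x1 = x2) \<and>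
     (\<forall>xs a. set xs \<subseteq> X \<longrightarrow> length xs = n \<longrightarrow> a \<in> X \<longrightarrow>
        P xs \<le> P (butlast xs @ [a]) + P (replicate (n - 1) a @ [last xs]) - P (replicate n a))"

definition pnm_cauchy :: "nat \<Rightarrow> ('a list \<Rightarrow> real) \<Rightarrow> (nat \<Rightarrow> 'a) \<Rightarrow> bool" where
  "pnm_cauchy n P x \<longleftrightarrow>
     (\<exists>r'::real. \<forall>\<epsilon>>0. \<exists>N::nat. \<forall>is::nat list. length is = n \<longrightarrow> (\<forall>i\<in>set is. i > N) \<longrightarrow>
        \<bar>P (map x is) - r'\<bar> < \<epsilon>)"

end

theory Submission
  imports Defs
begin

lemma pnm_perm:
  assumes "partial_n_metric n X P" "set xs \<subseteq> X" "length xs = n" "mset ys = mset xs"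
  shows "P ys = P xs"
  using assms unfolding partial_n_metric_def by blast

lemma pnm_tri:
  assumes "partial_n_metric n X P" "set xs \<subseteq> X" "length xs = n" "a \<in> X"
  shows "P xs \<le> P (butlast xs @ [a]) + P (replicate (n - 1) a @ [last xs]) - P (replicate n a)"
  using assms unfolding partial_n_metric_def by blast

lemma pnm_le:
  assumes "partial_n_metric n X P" "x1 \<in> X" "x2 \<in> X"
  shows "P (replicate n x1) \<le> P (replicate (n - 1) x1 @ [x2])"
  using assms unfolding partial_n_metric_def by blast

lemma upper:
  assumes pm: "partial_n_metric n X P" and a: "a \<in> X"
  shows "set ws \<subseteq> X \<Longrightarrow> length ws \<le> n \<Longrightarrow>
    P (replicate (n - length ws) a @ ws) \<le> P (replicate n a)
      + sum_list (map (\<lambda>y. P (replicate (n-1) a @ [y]) - P (replicate n a)) ws)"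
proof (induction ws)
  case Nil
  then show ?case by simp
next
  case (Cons y ws)
  define k where "k = n - length (y#ws)"
  have yX: "y \<in> X" and wsX: "set ws \<subseteq> X" using Cons.prems by auto
  have len: "length (replicate k a @ ws @ [y]) = n" using Cons.prems by (simp add: k_def)
  have sX: "set (replicate k a @ ws @ [y]) \<subseteq> X" using yX wsX a by (auto simp: set_replicate_conv_if)
  have p1: "P (replicate k a @ y # ws) = P (replicate k a @ ws @ [y])"
    by (rule pnm_perm[OF pm sX len]) simp
  have p2: "P (replicate k a @ ws @ [y]) \<le> P (replicate k a @ ws @ [a]) + P (replicate (n-1) a @ [y]) - P (replicate n a)"
    using pnm_tri[OF pm sX len a] by (simp add: butlast_append)
  have nk: "n - length ws = Suc k"
    using Cons.prems unfolding k_def by (simp del: replicate.simps)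
  have eqr: "replicate (n - length ws) a = replicate (Suc k) a"
    by (simp only: nk)
  have len2: "length (replicate (n - length ws) a @ ws) = n" using Cons.prems by simp
  have sX3: "set (replicate (n - length ws) a @ ws) \<subseteq> X" using wsX a by (auto simp: set_replicate_conv_if)
  have p3: "P (replicate k a @ ws @ [a]) = P (replicate (n - length ws) a @ ws)"
    by (rule pnm_perm[OF pm sX3 len2]) (simp add: eqr)
  have ih: "P (replicate (n - length ws) a @ ws) \<le> P (replicate n a)
      + sum_list (map (\<lambda>y. P (replicate (n-1) a @ [y]) - P (replicate n a)) ws)"
    using Cons.IH Cons.prems by simp
  have kk: "n - length (y#ws) = k" by (simp only: k_def)
  show ?case unfolding kk sum_list.Cons list.map using p1 p2 p3 ih by linarith
qed

lemma lower:
  assumes pm: "partial_n_metric n X P" and a: "a \<in> X"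
  shows "set ws \<subseteq> X \<Longrightarrow> length ws \<le> n \<Longrightarrow>
    P (replicate n a) - sum_list (map (\<lambda>y. P (replicate (n-1) y @ [a]) - P (replicate n y)) ws)
      \<le> P (replicate (n - length ws) a @ ws)"
proof (induction ws)
  case Nil
  then show ?case by simp
next
  case (Cons y ws)
  define k where "k = n - length (y#ws)"
  have yX: "y \<in> X" and wsX: "set ws \<subseteq> X" using Cons.prems by auto
  have len: "length (replicate k a @ ws @ [a]) = n" using Cons.prems by (simp add: k_def)
  have len3: "length (replicate k a @ ws @ [y]) = n" using Cons.prems by (simp add: k_def)
  have sX: "set (replicate k a @ ws @ [y]) \<subseteq> X" using yX wsX a by (auto simp: set_replicate_conv_if)
  have sX2: "set (replicate k a @ ws @ [a]) \<subseteq> X" using yX wsX a by (auto simp: set_replicate_conv_if)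
  have p1: "P (replicate k a @ y # ws) = P (replicate k a @ ws @ [y])"
    by (rule pnm_perm[OF pm sX len3]) simp
  have p2: "P (replicate k a @ ws @ [a]) \<le> P (replicate k a @ ws @ [y]) + P (replicate (n-1) y @ [a]) - P (replicate n y)"
    using pnm_tri[OF pm sX2 len yX] by (simp add: butlast_append)
  have nk: "n - length ws = Suc k"
    using Cons.prems unfolding k_def by (simp del: replicate.simps)
  have eqr: "replicate (n - length ws) a = replicate (Suc k) a"
    by (simp only: nk)
  have len2: "length (replicate (n - length ws) a @ ws) = n" using Cons.prems by simp
  have sX3: "set (replicate (n - length ws) a @ ws) \<subseteq> X" using wsX a by (auto simp: set_replicate_conv_if)
  have p3: "P (replicate k a @ ws @ [a]) = P (replicate (n - length ws) a @ ws)"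
    by (rule pnm_perm[OF pm sX3 len2]) (simp add: eqr)
  have ih: "P (replicate n a) - sum_list (map (\<lambda>y. P (replicate (n-1) y @ [a]) - P (replicate n y)) ws)
      \<le> P (replicate (n - length ws) a @ ws)"
    using Cons.IH Cons.prems by simp
  have kk: "n - length (y#ws) = k" by (simp only: k_def)
  show ?case unfolding kk sum_list.Cons list.map using p1 p2 p3 ih by linarith
qed

lemma sum_list_le_len:
  assumes "\<forall>w\<in>set ws. g w \<le> (c::real)"
  shows "sum_list (map g ws) \<le> real (length ws) * c"
  using assms by (induction ws) (auto simp: algebra_simps)

lemma diag:
  fixes s :: "nat \<Rightarrow> real"
  assumes ge: "\<forall>k. s k \<ge> r"
    and c: "\<forall>k. s (Suc k) \<le> s k - \<phi> (s k)"
    and p0: "\<forall>s\<ge>r. \<phi> s \<ge> 0"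
    and mono: "\<forall>s\<ge>r. \<forall>t\<ge>s. \<phi> s \<le> \<phi> t"
    and z: "\<forall>t\<ge>r. \<phi> t = 0 \<longleftrightarrow> t = r"
    and e: "\<epsilon> > 0"
  shows "\<exists>N. \<forall>k\<ge>N. s k < r + \<epsilon>"
proof -
  have dec: "s (Suc k) \<le> s k" for k
  proof -
    have "\<phi> (s k) \<ge> 0" using p0 ge by blast
    then show ?thesis using c by (metis diff_ge_0_iff_ge order_trans diff_le_eq le_add_same_cancel1)
  qed
  have decs: "s (k + m) \<le> s k" for k m
  proof (induction m)
    case 0 then show ?case by simp
  next
    case (Suc m) then show ?case using dec[of "k+m"] by simp
  qed
  have "\<exists>k. s k < r + \<epsilon>"
  proof (rule ccontr)
    assume "\<not> ?thesis"
    hence all: "\<forall>k. s k \<ge> r + \<epsilon>" by (meson not_less)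
    define d where "d = \<phi> (r + \<epsilon>)"
    have d0: "d \<ge> 0" using p0 e unfolding d_def by simp
    have dn: "d \<noteq> 0" using z e unfolding d_def by simp
    have dpos: "d > 0" using d0 dn by simp
    have phk: "\<phi> (s k) \<ge> d" for k using mono all e unfolding d_def by simp
    have bnd: "s k \<le> s 0 - real k * d" for k
    proof (induction k)
      case 0 then show ?case by simp
    next
      case (Suc k)
      have "s (Suc k) \<le> s k - \<phi> (s k)" using c by blast
      then show ?case using phk[of k] Suc.IH by (simp add: algebra_simps)
    qed
    obtain k where "real k * d > s 0 - r" using dpos ex_less_of_nat_mult by blast
    then show False using bnd[of k] ge by (smt (verit))
  qed
  then obtain N where N: "s N < r + \<epsilon>" by blast
  show ?thesis
  proof (intro exI allI impI)
    fix k assume "N \<le> k"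
    then obtain m where "k = N + m" using le_Suc_ex by blast
    then show "s k < r + \<epsilon>" using decs[of N m] N by simp
  qed
qed

theorem lemma5p12:
  fixes n :: nat and X :: "'a set" and P :: "'a list \<Rightarrow> real" and x\<^sub>o :: 'a
    and f :: "'a \<Rightarrow> 'a" and r :: real and \<phi> :: "real \<Rightarrow> real"
  assumes "n \<ge> 2"
    and "partial_n_metric n X P"
    and "x\<^sub>o \<in> X"
    and "\<forall>x\<in>X. f x \<in> X"
    and "\<forall>s\<ge>r. \<phi> s \<ge> 0"
    and "\<forall>s\<ge>r. \<forall>t\<ge>s. \<phi> s \<le> \<phi> t"
    and "\<forall>t\<ge>r. \<phi> t = 0 \<longleftrightarrow> t = r"
    and "\<forall>i::nat. r \<le> P (replicate n ((f ^^ i) x\<^sub>o))"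
    and "\<forall>i j::nat.
           P (replicate (n - 1) ((f ^^ (i + 1)) x\<^sub>o) @ [(f ^^ (j + 1)) x\<^sub>o])
           \<le> P (replicate (n - 1) ((f ^^ i) x\<^sub>o) @ [(f ^^ j) x\<^sub>o])
              - \<phi> (P (replicate (n - 1) ((f ^^ i) x\<^sub>o) @ [(f ^^ j) x\<^sub>o]))"
  shows "pnm_cauchy n P (\<lambda>i. (f ^^ i) x\<^sub>o)"
proof -
  note pm = assms(2) and p0 = assms(5) and mono = assms(6) and z = assms(7)
  define x where "x i = (f ^^ i) x\<^sub>o" for i
  define A where "A i j = P (replicate (n - 1) (x i) @ [x j])" for i j
  define p where "p i = P (replicate n (x i))" for i
  have xX: "x i \<in> X" for i unfolding x_def
    by (induction i) (use assms(3,4) in auto)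
  have pge: "p i \<ge> r" for i using assms(8) unfolding p_def x_def by auto
  have pA: "p i \<le> A i j" for i j unfolding p_def A_def using pnm_le[OF pm xX xX] .
  have Age: "A i j \<ge> r" for i j using pA pge order_trans by blast
  have pAd: "p i = A i i" for i unfolding p_def A_def using assms(1)
    by (metis One_nat_def Suc_diff_1 le_trans one_le_numeral not_one_le_zero not_less replicate_Suc replicate_append_same)
  have tri: "A i j \<le> A i k + A k j - p k" for i j k
  proof -
    have "length (replicate (n - 1) (x i) @ [x j]) = n" using assms(1) by simp
    moreover have "set (replicate (n - 1) (x i) @ [x j]) \<subseteq> X" using xX by (auto simp: set_replicate_conv_if)
    ultimately have "P (replicate (n - 1) (x i) @ [x j]) \<le> P (butlast (replicate (n - 1) (x i) @ [x j]) @ [x k]) + P (replicate (n - 1) (x k) @ [last (replicate (n - 1) (x i) @ [x j])]) - P (replicate n (x k))"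
      using pnm_tri[OF pm _ _ xX] by blast
    then show ?thesis
      unfolding A_def p_def by (simp add: butlast_append)
  qed
  have con: "A (Suc i) (Suc j) \<le> A i j - \<phi> (A i j)" for i j
    using assms(9) unfolding A_def x_def by simp
  have dg: "\<exists>N. \<forall>k\<ge>N. s k < r + e" if "e > 0" "\<forall>k. s (Suc k) \<le> s k - \<phi> (s k)"
      "\<forall>k. s k \<ge> r" for s e
    using diag[OF that(3) that(2) p0 mono z that(1)] .
  have main: "\<exists>N. \<forall>i\<ge>N. \<forall>j\<ge>N. A i j < r + e" if e: "e > 0" for e
  proof -
    define \<delta> where "\<delta> = min (\<phi> (r + e/2)) (e/2)"
    have ph: "\<phi> (r + e/2) > 0" using p0 z e
      by (metis add.right_neutral add_left_cancel half_gt_zero less_add_same_cancel1 linorder_not_le order_le_less)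
    have dpos: "\<delta> > 0" unfolding \<delta>_def using ph e by simp
    obtain N1 where N1: "\<forall>k\<ge>N1. A k k < r + \<delta>"
      using dg[OF dpos, of "\<lambda>k. A k k"] con Age by auto
    obtain N2 where N2: "\<forall>k\<ge>N2. A k (Suc k) < r + \<delta>"
      using dg[OF dpos, of "\<lambda>k. A k (Suc k)"] con Age by auto
    obtain N3 where N3: "\<forall>k\<ge>N3. A (Suc k) k < r + \<delta>"
      using dg[OF dpos, of "\<lambda>k. A (Suc k) k"] con Age by auto
    define N where "N = max N1 (max N2 N3)"
    have stp: "A (Suc i) (Suc j) < r + e - \<delta>" if "A i j < r + e" for i j
    proof (cases "A i j \<ge> r + e/2")
      case True
      have "\<phi> (A i j) \<ge> \<phi> (r + e/2)" using mono True e by simp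
      hence "\<phi> (A i j) \<ge> \<delta>" unfolding \<delta>_def by linarith
      then show ?thesis using con[of i j] that by linarith
    next
      case False
      have "\<phi> (A i j) \<ge> 0" using p0 Age by simp
      then show ?thesis using con[of i j] False unfolding \<delta>_def by linarith
    qed
    have ind: "A k (k+m) < r + e \<and> A (k+m) k < r + e" if "k \<ge> N" for k m
    proof (induction m)
      case 0
      then show ?case using N1 that dpos unfolding N_def \<delta>_def by fastforce
    next
      case (Suc m)
      have a1: "A (Suc k) (Suc (k+m)) < r + e - \<delta>" using stp Suc by blast
      have a2: "A (Suc (k+m)) (Suc k) < r + e - \<delta>" using stp Suc by blast
      have b1: "A k (Suc k) < r + \<delta>" using N2 that unfolding N_def by auto
      have b2: "A (Suc k) k < r + \<delta>" using N3 that unfolding N_def by auto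
      have "A k (k + Suc m) \<le> A k (Suc k) + A (Suc k) (Suc (k+m)) - p (Suc k)"
        using tri by simp
      moreover have "A (k + Suc m) k \<le> A (Suc (k+m)) (Suc k) + A (Suc k) k - p (Suc k)"
        using tri by simp
      ultimately show ?case using a1 a2 b1 b2 pge[of "Suc k"] by linarith
    qed
    show ?thesis
    proof (rule exI[where x=N], intro allI impI)
      fix i j assume i: "i \<ge> N" and j: "j \<ge> N"
      show "A i j < r + e"
      proof (cases "i \<le> j")
        case True
        then show ?thesis using ind[OF i, of "j - i"] by simp
      next
        case False
        then show ?thesis using ind[OF j, of "i - j"] by simp
      qed
    qed
  qed
  show ?thesis unfolding pnm_cauchy_def
  proof (rule exI[where x=r], intro allI impI)
    fix \<epsilon> :: real assume e: "\<epsilon> > 0"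
    define \<eta> where "\<eta> = \<epsilon> / (real n + 1)"
    have eta: "\<eta> > 0" unfolding \<eta>_def using e by simp
    have etan: "(real n + 1) * \<eta> = \<epsilon>" unfolding \<eta>_def by simp
    obtain N where N: "\<forall>i\<ge>N. \<forall>j\<ge>N. A i j < r + \<eta>" using main[OF eta] by blast
    show "\<exists>N. \<forall>is. length is = n \<longrightarrow> (\<forall>i\<in>set is. N < i) \<longrightarrow> \<bar>P (map (\<lambda>i. (f ^^ i) x\<^sub>o) is) - r\<bar> < \<epsilon>"
    proof (rule exI[where x=N], intro allI impI)
      fix "is" :: "nat list" assume len: "length is = n" and big: "\<forall>i\<in>set is. N < i"
      define ws where "ws = map x is"
      have wsX: "set ws \<subseteq> X" unfolding ws_def using xX by auto
      have lw: "length ws = n" unfolding ws_def using len by simp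
      have U: "P ws \<le> p N + sum_list (map (\<lambda>y. P (replicate (n-1) (x N) @ [y]) - p N) ws)"
        using upper[OF pm xX wsX] lw unfolding p_def by simp
      have L: "p N - sum_list (map (\<lambda>y. P (replicate (n-1) y @ [x N]) - P (replicate n y)) ws) \<le> P ws"
        using lower[OF pm xX wsX] lw unfolding p_def by simp
      have s1: "sum_list (map (\<lambda>y. P (replicate (n-1) (x N) @ [y]) - p N) ws) \<le> real (length ws) * \<eta>"
      proof (rule sum_list_le_len, rule ballI)
        fix w assume "w \<in> set ws"
        then obtain i where "i \<in> set is" "w = x i" unfolding ws_def by auto
        then have "A N i < r + \<eta>" using N big by auto
        then show "P (replicate (n-1) (x N) @ [w]) - p N \<le> \<eta>"
          using pge[of N] \<open>w = x i\<close> unfolding A_def by simp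
      qed
      have s2: "sum_list (map (\<lambda>y. P (replicate (n-1) y @ [x N]) - P (replicate n y)) ws) \<le> real (length ws) * \<eta>"
      proof (rule sum_list_le_len, rule ballI)
        fix w assume "w \<in> set ws"
        then obtain i where "i \<in> set is" "w = x i" unfolding ws_def by auto
        then have "A i N < r + \<eta>" using N big by auto
        then show "P (replicate (n-1) w @ [x N]) - P (replicate n w) \<le> \<eta>"
          using pge[of i] \<open>w = x i\<close> unfolding A_def p_def by simp
      qed
      have pN: "p N < r + \<eta>" using N pAd[of N] by auto
      have "P ws < r + \<epsilon>" using U s1 pN lw etan eta by (simp add: algebra_simps)
      moreover have "P ws > r - \<epsilon>" using L s2 pge[of N] lw etan eta by (simp add: algebra_simps)
      ultimately show "\<bar>P (map (\<lambda>i. (f ^^ i) x\<^sub>o) is) - r\<bar> < \<epsilon>"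
        unfolding ws_def x_def by (simp add: abs_less_iff)
    qed
  qed
qed

end
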